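(* Let $k\in\mathbb N$, $E\subseteq W(A)$ and $\vec s=(s_n(x))_{n=0}^\infty\in V^\infty(A)$ such that $E$ is $k$-large in $\vec s$. Then there exist $m\in\mathbb N$ and $w(x)\in\langle (s_n(x))_{n=0}^m\,\|\,(A_{k+n})_{n=0}^m\rangle_v$ such that $\{w(a):a\in A_k\}\subseteq E$.
   Context: $\mathbb N=\{0,1,2,\dots\}$. Fix an increasing sequence $A_0\subseteq A_1\subseteq A_2\subseteq\cdots$ of finite nonempty alphabets and set $A=\bigcup_{n\in\mathbb N}A_n$. $W(A)$ denotes the set of all finite words over $A$, including the empty word; words are concatenated by juxtaposition. Fix a symbol $x\notin A$. A variable word over $A$ is a finite word over $A\cup\{x\}$ in which $x$ occurs at least once; $V(A)$ is the set of variable words. For $s(x)\in V(A)$ and $a\in A\cup\{x\}$, $s(a)$ is obtained by replacing every occurrence of $x$ by $a$. $V^\infty(A)$ is the set of infinite sequences of variable words. For a sequence $(s_n(x))_{n\in I}$ of variable words and a sequence $(B_n)_{n\in I}$ of finite subsets of $A$, both indexed by a set $I\subseteq\mathbb N$ that is either a finite interval or of the form $\{m,m+1,\dots\}$: the constant span $\langle (s_n(x))_{n\in I}\,\|\,(B_n)_{n\in I}\rangle_c$ is the set of all words $s_{l_0}(a_0)s_{l_1}(a_1)\cdots s_{l_j}(a_j)$ with $j\ge0$, $l_0<\dots<l_j$ in $I$ and $a_i\in B_{l_i}$ for each $i$; the variable span $\langle (s_n(x))_{n\in I}\,\|\,(B_n)_{n\in I}\rangle_v$ is the set of all words $s_{l_0}(a_0)\cdots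 s_{l_j}(a_j)$ with $j\ge0$, $l_0<\dots<l_j$ in $I$, $a_i\in B_{l_i}\cup\{x\}$ for each $i$, and at least one $a_i=x$. (E.g. $(A_{k+n})_{n=p}^{q}$ denotes the sequence $B_n=A_{k+n}$, $p\le n\le q$.) Extracted $k$-subsequences: let $k\in\mathbb N$ and $\vec s=(s_n(x))_{n=0}^\infty\in V^\infty(A)$. A finite sequence $(t_n(x))_{n=0}^l$ of variable words is an extracted $k$-subsequence of $\vec s$ if there exist integers $0=m_0<m_1<\dots<m_{l+1}$ with $t_i(x)\in\langle (s_n(x))_{n=m_i}^{m_{i+1}-1}\,\|\,(A_{k+n})_{n=m_i}^{m_{i+1}-1}\rangle_v$ for all $0\le i\le l$. An infinite sequence $\vec t=(t_n(x))_{n=0}^\infty$ is an extracted $k$-subsequence of $\vec s$ if each initial segment $(t_n(x))_{n=0}^l$ is a finite extracted $k$-subsequence of $\vec s$. We write $\vec t\le_k\vec s$. A set $E\subseteq W(A)$ is $k$-large in $\vec s\in V^\infty(A)$ if $E\cap\langle\vec w\,\|\,(A_{k+n})_{n=0}^\infty\rangle_c\neq\emptyset$ for every $\vec w\in V^\infty(A)$ with $\vec w\le_k\vec s$. *)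

theory Defs
  imports Main
begin

text \<open>Alphabets: A :: nat => 'a set. The letters are elements of 'a; the variable
  symbol x is represented by None, a letter a by Some a, so variable words are
  lists over 'a option.\<close>

definition alphabet :: "(nat \<Rightarrow> 'a set) \<Rightarrow> 'a set" where
  "alphabet A = (\<Union>n. A n)"

definition words :: "(nat \<Rightarrow> 'a set) \<Rightarrow> 'a list set" where
  "words A = lists (alphabet A)"

definition is_varword :: "(nat \<Rightarrow> 'a set) \<Rightarrow> 'a option list \<Rightarrow> bool" where
  "is_varword A w \<longleftrightarrow> None \<in> set w \<and> (\<forall>a. Some a \<in> set w \<longrightarrow> a \<in> alphabet A)"

definition is_varseq :: "(nat \<Rightarrow> 'a set) \<Rightarrow> (nat \<Rightarrow> 'a option list) \<Rightarrow> bool" where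
  "is_varseq A s \<longleftrightarrow> (\<forall>n. is_varword A (s n))"

definition subst_c :: "'a option list \<Rightarrow> 'a \<Rightarrow> 'a list" where
  "subst_c w a = map (\<lambda>c. case c of None \<Rightarrow> a | Some b \<Rightarrow> b) w"

definition subst_v :: "'a option list \<Rightarrow> 'a option \<Rightarrow> 'a option list" where
  "subst_v w b = map (\<lambda>c. case c of None \<Rightarrow> b | Some a \<Rightarrow> Some a) w"

definition cspan :: "(nat \<Rightarrow> 'a option list) \<Rightarrow> (nat \<Rightarrow> 'a set) \<Rightarrow> nat set \<Rightarrow> 'a list set" where
  "cspan s B I = {concat (map (\<lambda>(l, a). subst_c (s l) a) ps) | ps.
      ps \<noteq> [] \<and> sorted_wrt (<) (map fst ps) \<and> (\<forall>(l, a)\<in>set ps. l \<in> I \<and> a \<in> B l)}"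

definition vspan :: "(nat \<Rightarrow> 'a option list) \<Rightarrow> (nat \<Rightarrow> 'a set) \<Rightarrow> nat set \<Rightarrow> 'a option list set" where
  "vspan s B I = {concat (map (\<lambda>(l, a). subst_v (s l) a) ps) | ps.
      ps \<noteq> [] \<and> sorted_wrt (<) (map fst ps) \<and>
      (\<forall>(l, a)\<in>set ps. l \<in> I \<and> a \<in> insert None (Some ` B l)) \<and>
      (\<exists>l. (l, None) \<in> set ps)}"

text \<open>t \<le>_k s: every initial segment (t_0..t_l) is an extracted k-subsequence.\<close>
definition extracted :: "(nat \<Rightarrow> 'a set) \<Rightarrow> nat \<Rightarrow> (nat \<Rightarrow> 'a option list) \<Rightarrow> (nat \<Rightarrow> 'a option list) \<Rightarrow> bool" where
  "extracted A k t s \<longleftrightarrow>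
     (\<forall>l. \<exists>m :: nat \<Rightarrow> nat. m 0 = 0 \<and> (\<forall>i\<le>l. m i < m (Suc i)) \<and>
        (\<forall>i\<le>l. t i \<in> vspan s (\<lambda>n. A (k + n)) {m i..<m (Suc i)}))"

definition k_large :: "(nat \<Rightarrow> 'a set) \<Rightarrow> nat \<Rightarrow> 'a list set \<Rightarrow> (nat \<Rightarrow> 'a option list) \<Rightarrow> bool" where
  "k_large A k E s \<longleftrightarrow>
     (\<forall>w. is_varseq A w \<and> extracted A k w s \<longrightarrow> E \<inter> cspan w (\<lambda>n. A (k + n)) UNIV \<noteq> {})"

end

theory Submission
  imports Defs "HOL-Library.Nat_Bijection"
begin

definition cube :: "'a set \<Rightarrow> nat \<Rightarrow> 'a list set" where
  "cube S N = {w. length w = N \<and> set w \<subseteq> S}"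

definition is_line :: "'a set \<Rightarrow> nat \<Rightarrow> 'a option list \<Rightarrow> bool" where
  "is_line S N l \<longleftrightarrow> length l = N \<and> None \<in> set l \<and> (\<forall>b. Some b \<in> set l \<longrightarrow> b \<in> S)"

lemma subst_c_append[simp]: "subst_c (xs @ ys) a = subst_c xs a @ subst_c ys a"
  by (simp add: subst_c_def)

lemma subst_c_map_Some[simp]: "subst_c (map Some f) a = f"
  by (induct f) (auto simp: subst_c_def)

lemma length_subst_c[simp]: "length (subst_c l a) = length l"
  by (simp add: subst_c_def)

lemma line_pt_cube:
  assumes "is_line S N l" "a \<in> S" shows "subst_c l a \<in> cube S N"
  using assms unfolding is_line_def cube_def subst_c_def
  by (auto split: option.splits)

lemma line_mono: "is_line S N l \<Longrightarrow> S \<subseteq> T \<Longrightarrow> is_line T N l"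
  unfolding is_line_def by auto

lemma finite_cube: "finite S \<Longrightarrow> finite (cube S N)"
  unfolding cube_def
  by (rule finite_subset[OF _ finite_lists_length_le[of S N]]) auto

lemma cube_append: "x \<in> cube S M \<Longrightarrow> y \<in> cube S N \<Longrightarrow> x @ y \<in> cube S (M + N)"
  unfolding cube_def by auto

lemma cube_mono: "x \<in> cube S M \<Longrightarrow> S \<subseteq> T \<Longrightarrow> x \<in> cube T M"
  unfolding cube_def by auto

definition monoline :: "'a set \<Rightarrow> nat \<Rightarrow> ('a list \<Rightarrow> 'c) \<Rightarrow> bool" where
  "monoline S N \<chi> \<longleftrightarrow> (\<exists>l. is_line S N l \<and> (\<forall>a\<in>S. \<forall>b\<in>S. \<chi> (subst_c l a) = \<chi> (subst_c l b)))"

lemma prefix_line: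
  assumes "x \<in> cube T M" "is_line T N l"
  shows "is_line T (M + N) (map Some x @ l)"
  using assms unfolding is_line_def cube_def by auto

lemma HJ_nat:
  assumes "finite S" "S \<noteq> {}"
  shows "\<forall>c. \<exists>N. \<forall>\<chi>::'a list \<Rightarrow> nat. (\<forall>w\<in>cube S N. \<chi> w < c) \<longrightarrow> monoline S N \<chi>"
  using assms
proof (induction S rule: finite_ne_induct)
  case (singleton z)
  show ?case
  proof (intro allI exI impI)
    fix c and \<chi> :: "'a list \<Rightarrow> nat"
    show "monoline {z} 1 \<chi>"
      unfolding monoline_def is_line_def
      by (rule exI[of _ "[None]"]) auto
  qed
next
  case (insert z S)
  let ?S' = "insert z S"
  from insert obtain a0 where a0: "a0 \<in> S" by auto
  show ?case
  proof
    fix c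
    have focus: "j \<le> c \<Longrightarrow> (\<exists>N. \<forall>\<chi>::'a list \<Rightarrow> nat. (\<forall>w\<in>cube ?S' N. \<chi> w < c) \<longrightarrow>
       monoline ?S' N \<chi> \<or> (\<exists>f T. f \<in> cube ?S' N \<and> T \<subseteq> {..<c} \<and> card T = j \<and>
          (\<forall>col\<in>T. \<exists>l. is_line ?S' N l \<and> subst_c l z = f \<and> (\<forall>a\<in>S. \<chi> (subst_c l a) = col))))" for j
      proof (induction j)
        case 0
        show ?case
        proof (intro exI[of _ 0] allI impI disjI2)
          fix \<chi> :: "'a list \<Rightarrow> nat"
          show "\<exists>f T. f \<in> cube ?S' 0 \<and> T \<subseteq> {..<c} \<and> card T = 0 \<and>
          (\<forall>col\<in>T. \<exists>l. is_line ?S' 0 l \<and> subst_c l z = f \<and> (\<forall>a\<in>S. \<chi> (subst_c l a) = col))"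
            by (rule exI[of _ "[]"], rule exI[of _ "{}"]) (simp add: cube_def)
        qed
      next
        case (Suc j)
        show ?case
        proof -
          from Suc.prems have "j \<le> c" by simp
          from Suc.IH[OF this] obtain Nj where Nj: "\<And>\<chi>::'a list \<Rightarrow> nat. (\<forall>w\<in>cube ?S' Nj. \<chi> w < c) \<Longrightarrow>
            monoline ?S' Nj \<chi> \<or> (\<exists>f T. f \<in> cube ?S' Nj \<and> T \<subseteq> {..<c} \<and> card T = j \<and>
            (\<forall>col\<in>T. \<exists>l. is_line ?S' Nj l \<and> subst_c l z = f \<and> (\<forall>a\<in>S. \<chi> (subst_c l a) = col)))"
            by blast
          obtain Ys where Ys: "set Ys = cube ?S' Nj"
            using finite_list[OF finite_cube[of ?S' Nj]] insert by auto
          define TT where "TT = {xs. set xs \<subseteq> {..<c} \<and> length xs \<le> length Ys}"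
          have finTT: "finite TT" unfolding TT_def by (rule finite_lists_length_le) auto
          define c' where "c' = Suc (Max (list_encode ` TT))"
          from insert.IH obtain M where M: "\<And>\<chi>::'a list \<Rightarrow> nat. (\<forall>w\<in>cube S M. \<chi> w < c') \<Longrightarrow> monoline S M \<chi>"
            by blast
          show "\<exists>N. \<forall>\<chi>::'a list \<Rightarrow> nat. (\<forall>w\<in>cube ?S' N. \<chi> w < c) \<longrightarrow>
             monoline ?S' N \<chi> \<or> (\<exists>f T. f \<in> cube ?S' N \<and> T \<subseteq> {..<c} \<and> card T = Suc j \<and>
             (\<forall>col\<in>T. \<exists>l. is_line ?S' N l \<and> subst_c l z = f \<and> (\<forall>a\<in>S. \<chi> (subst_c l a) = col)))"
          proof (intro exI allI impI)
            fix \<chi> :: "'a list \<Rightarrow> nat"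
            assume bnd: "\<forall>w\<in>cube ?S' (M + Nj). \<chi> w < c"
            define \<chi>' where "\<chi>' x = list_encode (map (\<lambda>y. \<chi> (x @ y)) Ys)" for x
            have "\<forall>w\<in>cube S M. \<chi>' w < c'"
            proof
              fix x assume x: "x \<in> cube S M"
              have "map (\<lambda>y. \<chi> (x @ y)) Ys \<in> TT"
                unfolding TT_def using bnd cube_append[OF cube_mono[OF x, of ?S']] Ys by auto
              hence "\<chi>' x \<le> Max (list_encode ` TT)"
                unfolding \<chi>'_def using finTT by auto
              thus "\<chi>' x < c'" unfolding c'_def by simp
            qed
            from M[OF this] obtain L where L: "is_line S M L"
              and Lm: "\<And>a b. a \<in> S \<Longrightarrow> b \<in> S \<Longrightarrow> \<chi>' (subst_c L a) = \<chi>' (subst_c L b)"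
              unfolding monoline_def by blast
            have Leq: "\<chi> (subst_c L a @ y) = \<chi> (subst_c L b @ y)"
              if "a \<in> S" "b \<in> S" "y \<in> cube ?S' Nj" for a b y
            proof -
              have "map (\<lambda>y. \<chi> (subst_c L a @ y)) Ys = map (\<lambda>y. \<chi> (subst_c L b @ y)) Ys"
                using Lm[OF that(1,2)] unfolding \<chi>'_def list_encode_eq .
              thus ?thesis using that(3) Ys by (auto simp: map_eq_conv)
            qed
            have L': "is_line ?S' M L" using line_mono[OF L] by auto
            have La0: "subst_c L a0 \<in> cube ?S' M" using line_pt_cube[OF L' ] a0 by auto
            have Lz: "subst_c L z \<in> cube ?S' M" using line_pt_cube[OF L' ] by auto
            define \<chi>0 where "\<chi>0 y = \<chi> (subst_c L a0 @ y)" for y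
            have "\<forall>w\<in>cube ?S' Nj. \<chi>0 w < c"
              unfolding \<chi>0_def using bnd cube_append[OF La0] by auto
            from Nj[OF this] show "monoline ?S' (M + Nj) \<chi> \<or> (\<exists>f T. f \<in> cube ?S' (M + Nj) \<and> T \<subseteq> {..<c} \<and> card T = Suc j \<and>
             (\<forall>col\<in>T. \<exists>l. is_line ?S' (M + Nj) l \<and> subst_c l z = f \<and> (\<forall>a\<in>S. \<chi> (subst_c l a) = col)))"
            proof
              assume "monoline ?S' Nj \<chi>0"
              then obtain l where l: "is_line ?S' Nj l"
                and lm: "\<forall>a\<in>?S'. \<forall>b\<in>?S'. \<chi>0 (subst_c l a) = \<chi>0 (subst_c l b)"
                unfolding monoline_def by blast
              have "monoline ?S' (M + Nj) \<chi>"
                unfolding monoline_def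
              proof (intro exI conjI ballI)
                show "is_line ?S' (M + Nj) (map Some (subst_c L a0) @ l)" by (rule prefix_line[OF La0 l])
                fix a b assume ab: "a \<in> ?S'" "b \<in> ?S'"
                have "\<chi>0 (subst_c l a) = \<chi>0 (subst_c l b)" using lm ab by blast
                thus "\<chi> (subst_c (map Some (subst_c L a0) @ l) a) = \<chi> (subst_c (map Some (subst_c L a0) @ l) b)"
                  unfolding \<chi>0_def by simp
              qed
              thus ?thesis ..
            next
              assume "\<exists>f T. f \<in> cube ?S' Nj \<and> T \<subseteq> {..<c} \<and> card T = j \<and>
                (\<forall>col\<in>T. \<exists>l. is_line ?S' Nj l \<and> subst_c l z = f \<and> (\<forall>a\<in>S. \<chi>0 (subst_c l a) = col))"
              then obtain f T where f: "f \<in> cube ?S' Nj" and T: "T \<subseteq> {..<c}" "card T = j"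
                and Tl: "\<And>col. col \<in> T \<Longrightarrow> \<exists>l. is_line ?S' Nj l \<and> subst_c l z = f \<and> (\<forall>a\<in>S. \<chi>0 (subst_c l a) = col)"
                by blast
              show ?thesis
              proof (cases "\<chi>0 f \<in> T")
                case True
                from Tl[OF True] obtain l where l: "is_line ?S' Nj l" "subst_c l z = f"
                  "\<forall>a\<in>S. \<chi>0 (subst_c l a) = \<chi>0 f" by blast
                have "monoline ?S' (M + Nj) \<chi>"
                  unfolding monoline_def
                proof (intro exI conjI ballI)
                  show "is_line ?S' (M + Nj) (map Some (subst_c L a0) @ l)" by (rule prefix_line[OF La0 l(1)])
                  have all: "\<chi>0 (subst_c l a) = \<chi>0 f" if "a \<in> ?S'" for a
                    using that l(2,3) by (cases "a = z") auto
                  fix a b assume ab: "a \<in> ?S'" "b \<in> ?S'"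
                  have "\<chi>0 (subst_c l a) = \<chi>0 (subst_c l b)" using all[OF ab(1)] all[OF ab(2)] by simp
                  thus "\<chi> (subst_c (map Some (subst_c L a0) @ l) a) = \<chi> (subst_c (map Some (subst_c L a0) @ l) b)"
                    unfolding \<chi>0_def by simp
                qed
                thus ?thesis ..
              next
                case False
                have finT: "finite T" using T(1) finite_subset by blast
                have c0: "\<chi>0 f < c" unfolding \<chi>0_def using bnd cube_append[OF La0 f] by auto
                have "\<exists>f T. f \<in> cube ?S' (M + Nj) \<and> T \<subseteq> {..<c} \<and> card T = Suc j \<and>
                  (\<forall>col\<in>T. \<exists>l. is_line ?S' (M + Nj) l \<and> subst_c l z = f \<and> (\<forall>a\<in>S. \<chi> (subst_c l a) = col))"
                proof (intro exI conjI)
                  show "subst_c L z @ f \<in> cube ?S' (M + Nj)" using cube_append[OF Lz f] .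
                  show "insert (\<chi>0 f) T \<subseteq> {..<c}" using T c0 by auto
                  show "card (insert (\<chi>0 f) T) = Suc j" using False finT T by simp
                  show "\<forall>col\<in>insert (\<chi>0 f) T. \<exists>l. is_line ?S' (M + Nj) l \<and> subst_c l z = subst_c L z @ f \<and>
                         (\<forall>a\<in>S. \<chi> (subst_c l a) = col)"
                  proof
                    fix col assume col: "col \<in> insert (\<chi>0 f) T"
                    show "\<exists>l. is_line ?S' (M + Nj) l \<and> subst_c l z = subst_c L z @ f \<and>
                         (\<forall>a\<in>S. \<chi> (subst_c l a) = col)"
                    proof (cases "col = \<chi>0 f")
                      case True
                      show ?thesis
                      proof (intro exI conjI ballI)
                        show "is_line ?S' (M + Nj) (L @ map Some f)"
                          using L' f unfolding is_line_def cube_def by auto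
                        show "subst_c (L @ map Some f) z = subst_c L z @ f" by simp
                        fix a assume "a \<in> S"
                        thus "\<chi> (subst_c (L @ map Some f) a) = col"
                          using Leq[OF _ a0 f] True unfolding \<chi>0_def by simp
                      qed
                    next
                      case False
                      with col have "col \<in> T" by auto
                      from Tl[OF this] obtain l where l: "is_line ?S' Nj l" "subst_c l z = f"
                        "\<forall>a\<in>S. \<chi>0 (subst_c l a) = col" by blast
                      show ?thesis
                      proof (intro exI conjI ballI)
                        show "is_line ?S' (M + Nj) (L @ l)"
                          using L' l(1) unfolding is_line_def by auto
                        show "subst_c (L @ l) z = subst_c L z @ f" using l(2) by simp
                        fix a assume a: "a \<in> S"
                        have "subst_c l a \<in> cube ?S' Nj" using line_pt_cube[OF l(1)] a by auto
                        thus "\<chi> (subst_c (L @ l) a) = col"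
                          using Leq[OF a a0] l(3) a unfolding \<chi>0_def by simp
                      qed
                    qed
                  qed
                qed
                thus ?thesis ..
              qed
            qed
          qed
        qed
      qed
    from focus[of c] obtain N where N: "\<And>\<chi>::'a list \<Rightarrow> nat. (\<forall>w\<in>cube ?S' N. \<chi> w < c) \<Longrightarrow>
       monoline ?S' N \<chi> \<or> (\<exists>f T. f \<in> cube ?S' N \<and> T \<subseteq> {..<c} \<and> card T = c \<and>
          (\<forall>col\<in>T. \<exists>l. is_line ?S' N l \<and> subst_c l z = f \<and> (\<forall>a\<in>S. \<chi> (subst_c l a) = col)))"
      by blast
    show "\<exists>N. \<forall>\<chi>::'a list \<Rightarrow> nat. (\<forall>w\<in>cube ?S' N. \<chi> w < c) \<longrightarrow> monoline ?S' N \<chi>"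
    proof (intro exI allI impI)
      fix \<chi> :: "'a list \<Rightarrow> nat"
      assume bnd: "\<forall>w\<in>cube ?S' N. \<chi> w < c"
      from N[OF bnd] show "monoline ?S' N \<chi>"
      proof
        assume "\<exists>f T. f \<in> cube ?S' N \<and> T \<subseteq> {..<c} \<and> card T = c \<and>
          (\<forall>col\<in>T. \<exists>l. is_line ?S' N l \<and> subst_c l z = f \<and> (\<forall>a\<in>S. \<chi> (subst_c l a) = col))"
        then obtain f T where f: "f \<in> cube ?S' N" and T: "T \<subseteq> {..<c}" "card T = c"
          and Tl: "\<And>col. col \<in> T \<Longrightarrow> \<exists>l. is_line ?S' N l \<and> subst_c l z = f \<and> (\<forall>a\<in>S. \<chi> (subst_c l a) = col)"
          by blast
        have "T = {..<c}" using T by (simp add: card_subset_eq)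
        hence "\<chi> f \<in> T" using bnd f by auto
        from Tl[OF this] obtain l where l: "is_line ?S' N l" "subst_c l z = f"
          "\<forall>a\<in>S. \<chi> (subst_c l a) = \<chi> f" by blast
        show ?thesis unfolding monoline_def
          by (rule exI[of _ l]) (use l in auto)
      qed
    qed
  qed
qed

lemma HJ:
  assumes "finite S" "S \<noteq> {}" "finite C"
  shows "\<exists>N. \<forall>\<chi>::'a list \<Rightarrow> 'c. (\<forall>w\<in>cube S N. \<chi> w \<in> C) \<longrightarrow> monoline S N \<chi>"
proof -
  obtain g where g: "bij_betw g C {0..<card C}" using ex_bij_betw_finite_nat[OF assms(3)] by blast
  from HJ_nat[OF assms(1,2)] obtain N where
    N: "\<And>\<chi>::'a list \<Rightarrow> nat. (\<forall>w\<in>cube S N. \<chi> w < card C) \<Longrightarrow> monoline S N \<chi>" by blast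
  show ?thesis
  proof (intro exI allI impI)
    fix \<chi> :: "'a list \<Rightarrow> 'c" assume bnd: "\<forall>w\<in>cube S N. \<chi> w \<in> C"
    have "\<forall>w\<in>cube S N. (g \<circ> \<chi>) w < card C" using bnd g by (auto simp: bij_betw_def)
    from N[OF this] obtain l where l: "is_line S N l"
      and m: "\<forall>a\<in>S. \<forall>b\<in>S. g (\<chi> (subst_c l a)) = g (\<chi> (subst_c l b))"
      unfolding monoline_def by auto
    have inj: "inj_on g C" using g by (auto simp: bij_betw_def)
    show "monoline S N \<chi>" unfolding monoline_def
    proof (intro exI conjI ballI)
      fix a b assume "a \<in> S" "b \<in> S"
      thus "\<chi> (subst_c l a) = \<chi> (subst_c l b)"
        using m inj bnd line_pt_cube[OF l] by (meson inj_onD)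
    qed (rule l)
  qed
qed


lemma subst_c_concat: "subst_c (concat xs) a = concat (map (\<lambda>x. subst_c x a) xs)"
  by (simp add: subst_c_def map_concat)

lemma subst_c_subst_v: "subst_c (subst_v x c) a = subst_c x (case c of None \<Rightarrow> a | Some b \<Rightarrow> b)"
  unfolding subst_c_def subst_v_def by (auto split: option.splits)

lemma nth_subst_c: "i < length l \<Longrightarrow> subst_c l a ! i = (case l ! i of None \<Rightarrow> a | Some c \<Rightarrow> c)"
  by (simp add: subst_c_def)

lemma subst_v_Some: "subst_v x (Some a) = map Some (subst_c x a)"
  unfolding subst_c_def subst_v_def by (auto split: option.splits)

lemma A_mono: "(\<And>n. A n \<subseteq> A (Suc n)) \<Longrightarrow> i \<le> j \<Longrightarrow> A i \<subseteq> A j"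
  using lift_Suc_mono_le[of A] by blast

definition CS :: "(nat \<Rightarrow> 'a option list) \<Rightarrow> (nat \<Rightarrow> 'a set) \<Rightarrow> nat \<Rightarrow> nat \<Rightarrow> 'a list set" where
  "CS s A k m = {concat (map (\<lambda>(j, a). subst_c (s j) a) qs) | qs.
      sorted_wrt (<) (map fst qs) \<and> (\<forall>(j, a)\<in>set qs. j < m \<and> a \<in> A (k + j))}"

lemma finite_CS:
  assumes fin: "\<And>n. finite (A n)"
  shows "finite (CS s A k m)"
proof -
  define X where "X = {..<m} \<times> (\<Union>j<m. A (k + j))"
  have finX: "finite X" unfolding X_def using fin by auto
  have "{qs. sorted_wrt (<) (map fst qs) \<and> (\<forall>(j, a)\<in>set qs. j < m \<and> a \<in> A (k + j))}
        \<subseteq> {qs. set qs \<subseteq> X \<and> length qs \<le> m}"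
  proof (intro subsetI CollectI, elim CollectE conjE, intro conjI)
    fix qs assume s: "sorted_wrt (<) (map fst qs)" and q: "\<forall>(j, a)\<in>set qs. j < m \<and> a \<in> A (k + j)"
    show "set qs \<subseteq> X" unfolding X_def using q by auto
    have d: "distinct (map fst qs)" using s strict_sorted_iff by blast
    have "length qs = card (set (map fst qs))" using distinct_card[OF d] by simp
    also have "\<dots> \<le> card {..<m}" using q by (intro card_mono) auto
    finally show "length qs \<le> m" by simp
  qed
  hence "finite {qs. sorted_wrt (<) (map fst qs) \<and> (\<forall>(j, a)\<in>set qs. j < m \<and> a \<in> A (k + j))}"
    using finite_subset finite_lists_length_le[OF finX] by blast
  thus ?thesis unfolding CS_def by (simp add: setcompr_eq_image)
qed

lemma step:
  fixes A :: "nat \<Rightarrow> 'a set"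
  assumes mono: "\<And>n. A n \<subseteq> A (Suc n)" and fin: "\<And>n. finite (A n)" and ne: "\<And>n. A n \<noteq> {}"
   and H: "\<And>m w. w \<in> vspan s (\<lambda>n. A (k + n)) {0..m} \<Longrightarrow> \<exists>a\<in>A k. subst_c w a \<notin> E"
  shows "\<exists>m' w. m < m' \<and> w \<in> vspan s (\<lambda>n. A (k + n)) {m..<m'} \<and>
     (\<forall>p\<in>CS s A k m. \<forall>a\<in>A (k + m). p @ subst_c w a \<notin> E)"
proof -
  define P where "P = CS s A k m \<times> A (k + m)"
  have finP: "finite P" unfolding P_def using finite_CS[OF fin] fin by auto
  define D where "D d = concat (map (\<lambda>i. subst_c (s (Suc m + i)) (d ! i)) [0..<length d])" for d :: "'a list"
  define \<chi> where "\<chi> d = {(p, a)\<in>P. p @ subst_c (s m) a @ D d \<in> E}" for d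
  obtain N where N: "\<And>\<chi>::'a list \<Rightarrow> ('a list \<times> 'a) set. (\<forall>w\<in>cube (A k) N. \<chi> w \<in> Pow P) \<Longrightarrow> monoline (A k) N \<chi>"
    using HJ[OF fin ne, of "Pow P"] finP by blast
  have "monoline (A k) N \<chi>" by (rule N) (auto simp: \<chi>_def)
  then obtain v where v: "is_line (A k) N v"
    and vm: "\<And>a b. a \<in> A k \<Longrightarrow> b \<in> A k \<Longrightarrow> \<chi> (subst_c v a) = \<chi> (subst_c v b)"
    unfolding monoline_def by blast
  obtain b0 where b0: "b0 \<in> A k" using ne by blast
  define d0 where "d0 = subst_c v b0"
  have d0: "d0 \<in> cube (A k) N" unfolding d0_def by (rule line_pt_cube[OF v b0])
  define ps where "ps = (m, None) # map (\<lambda>i. (Suc m + i, Some (d0 ! i))) [0..<N]"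
  define w where "w = concat (map (\<lambda>(l, a). subst_v (s l) a) ps)"
  have mapfst: "map fst ps = [m..<Suc m + N]"
    unfolding ps_def by (rule nth_equalityI) (auto simp: nth_Cons nth_append simp del: upt_Suc split: nat.splits)
  have Amk: "A k \<subseteq> A (k + j)" for j using A_mono[of A k "k + j", OF mono] by simp
  have "w \<in> vspan s (\<lambda>n. A (k + n)) {m..<Suc m + N}"
    unfolding vspan_def w_def
  proof (rule CollectI, rule exI[of _ ps], intro conjI)
    show "ps \<noteq> []" unfolding ps_def by simp
    show "sorted_wrt (<) (map fst ps)" unfolding mapfst by (rule sorted_wrt_upt)
    show "\<exists>l. (l, None) \<in> set ps" unfolding ps_def by auto
    show "\<forall>(l, a)\<in>set ps. l \<in> {m..<Suc m + N} \<and> a \<in> insert None (Some ` A (k + l))"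
    proof
      fix x assume "x \<in> set ps"
      then consider "x = (m, None)" | i where "i < N" "x = (Suc m + i, Some (d0 ! i))"
        unfolding ps_def by auto
      thus "case x of (l, a) \<Rightarrow> l \<in> {m..<Suc m + N} \<and> a \<in> insert None (Some ` A (k + l))"
      proof cases
        case 2
        have "d0 ! i \<in> A k" using d0 2(1) unfolding cube_def by auto
        thus ?thesis using 2 Amk[of "Suc m + i"] by auto
      qed auto
    qed
  qed simp
  moreover have "\<forall>p\<in>CS s A k m. \<forall>a\<in>A (k + m). p @ subst_c w a \<notin> E"
  proof (intro ballI notI)
    fix p a assume p: "p \<in> CS s A k m" and a: "a \<in> A (k + m)" and inE: "p @ subst_c w a \<in> E"
    have sw: "subst_c w a = subst_c (s m) a @ D d0"
      unfolding w_def ps_def D_def using d0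
      by (simp add: subst_c_concat subst_c_subst_v comp_def cube_def)
    have pP: "(p, a) \<in> P" unfolding P_def using p a by auto
    hence in0: "(p, a) \<in> \<chi> d0" unfolding \<chi>_def using inE sw by simp
    from p obtain qs where qs: "sorted_wrt (<) (map fst qs)" "\<forall>(j, c)\<in>set qs. j < m \<and> c \<in> A (k + j)"
      and pq: "p = concat (map (\<lambda>(j, a). subst_c (s j) a) qs)"
      unfolding CS_def by blast
    define psu where "psu = map (\<lambda>(j, c). (j, Some c)) qs @ (m, Some a) # map (\<lambda>i. (Suc m + i, v ! i)) [0..<N]"
    define u where "u = concat (map (\<lambda>(l, c). subst_v (s l) c) psu)"
    have lv: "length v = N" using v unfolding is_line_def by simp
    have "u \<in> vspan s (\<lambda>n. A (k + n)) {0..Suc m + N}"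
      unfolding vspan_def u_def
    proof (rule CollectI, rule exI[of _ psu], intro conjI)
      show "psu \<noteq> []" unfolding psu_def by simp
      have mf: "map fst psu = map fst qs @ [m..<Suc m + N]"
      proof -
        have "map fst (map (\<lambda>(j, c). (j, Some c)) qs) = map fst qs" by (induct qs) auto
        moreover have "m # map fst (map (\<lambda>i. (Suc m + i, v ! i)) [0..<N]) = [m..<Suc m + N]"
          by (rule nth_equalityI) (auto simp: nth_Cons nth_append simp del: upt_Suc split: nat.splits)
        ultimately show ?thesis unfolding psu_def by simp
      qed
      show "sorted_wrt (<) (map fst psu)" unfolding mf sorted_wrt_append
        using qs by (auto simp: case_prod_unfold simp del: upt_Suc)
      have "None \<in> set v" using v unfolding is_line_def by simp
      then obtain i where "i < N" "v ! i = None" using lv by (auto simp: in_set_conv_nth)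
      thus "\<exists>l. (l, None) \<in> set psu" unfolding psu_def by force
      show "\<forall>(l, c)\<in>set psu. l \<in> {0..Suc m + N} \<and> c \<in> insert None (Some ` A (k + l))"
      proof
        fix x assume "x \<in> set psu"
        then consider j c where "(j, c) \<in> set qs" "x = (j, Some c)" | "x = (m, Some a)"
          | i where "i < N" "x = (Suc m + i, v ! i)"
          unfolding psu_def by auto
        thus "case x of (l, c) \<Rightarrow> l \<in> {0..Suc m + N} \<and> c \<in> insert None (Some ` A (k + l))"
        proof cases
          case 1 thus ?thesis using qs(2) by fastforce
        next
          case 2 thus ?thesis using a by auto
        next
          case 3
          show ?thesis
          proof (cases "v ! i")
            case (Some b)
            have "b \<in> A k" using v Some 3(1) lv unfolding is_line_def by (metis nth_mem)
            thus ?thesis using 3 Some Amk[of "Suc m + i"] by auto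
          qed (use 3 in auto)
        qed
      qed
    qed simp
    from H[OF this] obtain b where b: "b \<in> A k" and nb: "subst_c u b \<notin> E" by blast
    have eqD: "D (subst_c v b) = concat (map (\<lambda>i. subst_c (s (Suc m + i)) (case v ! i of None \<Rightarrow> b | Some c \<Rightarrow> c)) [0..<N])"
      unfolding D_def using lv by (auto simp: nth_subst_c intro!: arg_cong[where f=concat] map_cong)
    have "subst_c u b = p @ subst_c (s m) a @ D (subst_c v b)"
      unfolding u_def psu_def eqD pq
      by (simp add: subst_c_concat subst_c_subst_v comp_def case_prod_unfold)
    hence "(p, a) \<notin> \<chi> (subst_c v b)" unfolding \<chi>_def using nb by simp
    moreover have "\<chi> (subst_c v b) = \<chi> d0" unfolding d0_def by (rule vm[OF b b0])
    ultimately show False using in0 by simp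
  qed
  ultimately show ?thesis by (intro exI[of _ "Suc m + N"] exI[of _ w]) simp
qed

lemma vspan_varword:
  assumes vs: "is_varseq A s" and w: "w \<in> vspan s (\<lambda>n. A (k + n)) I"
  shows "is_varword A w"
proof -
  from w obtain ps where w: "w = concat (map (\<lambda>(l, a). subst_v (s l) a) ps)"
    and ps: "\<forall>(l, a)\<in>set ps. l \<in> I \<and> a \<in> insert None (Some ` A (k + l))"
    and l0: "\<exists>l. (l, None) \<in> set ps"
    unfolding vspan_def by blast
  from l0 obtain l0 where l0: "(l0, None) \<in> set ps" by blast
  have "None \<in> set (s l0)" using vs unfolding is_varseq_def is_varword_def by blast
  hence "None \<in> set (subst_v (s l0) None)" unfolding subst_v_def by force
  hence n: "None \<in> set w" unfolding w using l0 by force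
  have "a \<in> alphabet A" if "Some a \<in> set w" for a
  proof -
    from that obtain l c where lc: "(l, c) \<in> set ps" and a: "Some a \<in> set (subst_v (s l) c)"
      unfolding w by auto
    from a obtain y where y: "y \<in> set (s l)" and ya: "Some a = (case y of None \<Rightarrow> c | Some b \<Rightarrow> Some b)"
      unfolding subst_v_def by auto
    show ?thesis
    proof (cases y)
      case None
      with ya have "c = Some a" by simp
      with lc ps have "a \<in> A (k + l)" by auto
      thus ?thesis unfolding alphabet_def by auto
    next
      case (Some b)
      with ya y vs show ?thesis unfolding is_varseq_def is_varword_def by auto
    qed
  qed
  with n show ?thesis unfolding is_varword_def by blast
qed

lemma vspan_block:
  fixes A :: "nat \<Rightarrow> 'a set"
  assumes mono: "\<And>n. A n \<subseteq> A (Suc n)"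
    and w: "w \<in> vspan s (\<lambda>n. A (k + n)) {lo..<hi}" and a: "a \<in> A (k + l)" and l: "l \<le> lo"
  shows "\<exists>qs. sorted_wrt (<) (map fst qs) \<and> (\<forall>(j, c)\<in>set qs. lo \<le> j \<and> j < hi \<and> c \<in> A (k + j)) \<and>
     concat (map (\<lambda>(j, c). subst_c (s j) c) qs) = subst_c w a"
proof -
  from w obtain ps where w: "w = concat (map (\<lambda>(l, a). subst_v (s l) a) ps)"
    and so: "sorted_wrt (<) (map fst ps)"
    and ps: "\<forall>(l, a)\<in>set ps. l \<in> {lo..<hi} \<and> a \<in> insert None (Some ` A (k + l))"
    unfolding vspan_def by blast
  define qs where "qs = map (\<lambda>(j, c). (j, case c of None \<Rightarrow> a | Some b \<Rightarrow> b)) ps"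
  show ?thesis
  proof (intro exI conjI)
    have "map fst qs = map fst ps" unfolding qs_def by (induct ps) auto
    thus "sorted_wrt (<) (map fst qs)" using so by simp
    show "\<forall>(j, c)\<in>set qs. lo \<le> j \<and> j < hi \<and> c \<in> A (k + j)"
    proof
      fix x assume "x \<in> set qs"
      then obtain j c where jc: "(j, c) \<in> set ps" and x: "x = (j, case c of None \<Rightarrow> a | Some b \<Rightarrow> b)"
        unfolding qs_def by auto
      have "lo \<le> j" using jc ps by auto
      hence "A (k + l) \<subseteq> A (k + j)" using A_mono[of A "k + l" "k + j", OF mono] l by auto
      thus "case x of (j, c) \<Rightarrow> lo \<le> j \<and> j < hi \<and> c \<in> A (k + j)"
        using jc ps x a by (cases c) auto
    qed
    show "concat (map (\<lambda>(j, c). subst_c (s j) c) qs) = subst_c w a"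
      unfolding w qs_def by (simp add: subst_c_concat subst_c_subst_v comp_def case_prod_unfold)
  qed
qed

theorem fact3p7:
  fixes A :: "nat \<Rightarrow> 'a set" and k :: nat and E :: "'a list set"
    and s :: "nat \<Rightarrow> 'a option list"
  assumes "\<And>n. A n \<subseteq> A (Suc n)" and "\<And>n. finite (A n)" and "\<And>n. A n \<noteq> {}"
    and "E \<subseteq> words A" and "is_varseq A s" and "k_large A k E s"
  shows "\<exists>m w. w \<in> vspan s (\<lambda>n. A (k + n)) {0..m} \<and> (\<lambda>a. subst_c w a) ` A k \<subseteq> E"
proof (rule ccontr)
  note mono = assms(1) and fin = assms(2) and ne = assms(3) and vs = assms(5) and kl = assms(6)
  assume "\<not> ?thesis"
  hence H: "\<And>m w. w \<in> vspan s (\<lambda>n. A (k + n)) {0..m} \<Longrightarrow> \<exists>a\<in>A k. subst_c w a \<notin> E"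
    by blast
  have "\<forall>m. \<exists>r. m < fst r \<and> snd r \<in> vspan s (\<lambda>n. A (k + n)) {m..<fst r} \<and>
     (\<forall>p\<in>CS s A k m. \<forall>a\<in>A (k + m). p @ subst_c (snd r) a \<notin> E)"
    using step[OF mono fin ne H] by fastforce
  then obtain F where F: "\<And>m. m < fst (F m) \<and> snd (F m) \<in> vspan s (\<lambda>n. A (k + n)) {m..<fst (F m)} \<and>
     (\<forall>p\<in>CS s A k m. \<forall>a\<in>A (k + m). p @ subst_c (snd (F m)) a \<notin> E)"
    by metis
  define ms where "ms = rec_nat 0 (\<lambda>_ m. fst (F m))"
  have ms0: "ms 0 = 0" and msS: "ms (Suc n) = fst (F (ms n))" for n unfolding ms_def by simp_all
  define w where "w n = snd (F (ms n))" for n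
  have msl: "ms n < ms (Suc n)" for n using F[of "ms n"] msS by simp
  have smono: "strict_mono ms" using msl by (simp add: strict_mono_Suc_iff)
  have wv: "w n \<in> vspan s (\<lambda>n. A (k + n)) {ms n..<ms (Suc n)}" for n
    using F[of "ms n"] msS w_def by simp
  have wE: "\<And>p a. p \<in> CS s A k (ms n) \<Longrightarrow> a \<in> A (k + ms n) \<Longrightarrow> p @ subst_c (w n) a \<notin> E" for n
    using F[of "ms n"] unfolding w_def by auto
  have "is_varseq A w" unfolding is_varseq_def using vspan_varword[OF vs wv] by blast
  moreover have "extracted A k w s"
    unfolding extracted_def using ms0 msl wv by blast
  ultimately have "E \<inter> cspan w (\<lambda>n. A (k + n)) UNIV \<noteq> {}"
    using kl unfolding k_large_def by blast
  then obtain ps where ps: "ps \<noteq> []" "sorted_wrt (<) (map fst ps)"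
    "\<forall>(l, a)\<in>set ps. a \<in> A (k + l)"
    and zE: "concat (map (\<lambda>(l, a). subst_c (w l) a) ps) \<in> E"
    unfolding cspan_def by blast
  have pref: "sorted_wrt (<) (map fst qs) \<Longrightarrow> (\<forall>(j, a)\<in>set qs. j < l \<and> a \<in> A (k + j)) \<Longrightarrow>
     concat (map (\<lambda>(j, a). subst_c (w j) a) qs) \<in> CS s A k (ms l)" for qs l
  proof (induction qs arbitrary: l rule: rev_induct)
    case Nil
    show ?case unfolding CS_def by (rule CollectI, rule exI[of _ "[]"]) simp
  next
    case (snoc x qs)
    obtain j a where x: "x = (j, a)" by (cases x)
    from snoc.prems have jl: "j < l" and a: "a \<in> A (k + j)" and
      so: "sorted_wrt (<) (map fst qs)" and lt: "\<forall>y\<in>set qs. fst y < j"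
      and qa: "\<forall>(i, b)\<in>set qs. b \<in> A (k + i)"
      unfolding x by (auto simp: sorted_wrt_append)
    have "\<forall>(i, b)\<in>set qs. i < j \<and> b \<in> A (k + i)" using lt qa by auto
    from snoc.IH[OF so this] obtain q1 where q1: "sorted_wrt (<) (map fst q1)"
      "\<forall>(i, b)\<in>set q1. i < ms j \<and> b \<in> A (k + i)"
      and e1: "concat (map (\<lambda>(j, a). subst_c (w j) a) qs) = concat (map (\<lambda>(j, a). subst_c (s j) a) q1)"
      unfolding CS_def by blast
    have jm: "j \<le> ms j" using strict_mono_imp_increasing[OF smono] by blast
    from vspan_block[OF mono wv a jm] obtain q2 where q2: "sorted_wrt (<) (map fst q2)"
      "\<forall>(i, c)\<in>set q2. ms j \<le> i \<and> i < ms (Suc j) \<and> c \<in> A (k + i)"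
      and e2: "concat (map (\<lambda>(i, c). subst_c (s i) c) q2) = subst_c (w j) a" by blast
    have "ms (Suc j) \<le> ms l" using smono jl by (simp add: strict_mono_less_eq)
    show ?case unfolding CS_def
    proof (rule CollectI, rule exI[of _ "q1 @ q2"], intro conjI)
      show "concat (map (\<lambda>(j, a). subst_c (w j) a) (qs @ [x])) = concat (map (\<lambda>(j, a). subst_c (s j) a) (q1 @ q2))"
        using e1 e2 x by simp
      show "sorted_wrt (<) (map fst (q1 @ q2))" using q1 q2 by (fastforce simp: sorted_wrt_append)
      show "\<forall>(j, a)\<in>set (q1 @ q2). j < ms l \<and> a \<in> A (k + j)"
      proof
        fix y assume y: "y \<in> set (q1 @ q2)"
        obtain i b where yi: "y = (i, b)" by (cases y)
        have "i < ms l \<and> b \<in> A (k + i)"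
        proof (cases "y \<in> set q1")
          case True thus ?thesis using q1(2) yi msl[of j] \<open>ms (Suc j) \<le> ms l\<close> by fastforce
        next
          case False hence "y \<in> set q2" using y by simp
          thus ?thesis using q2(2) yi \<open>ms (Suc j) \<le> ms l\<close> by fastforce
        qed
        thus "case y of (j, a) \<Rightarrow> j < ms l \<and> a \<in> A (k + j)" using yi by simp
      qed
    qed
  qed
  from ps(1) obtain ps' l a where pse: "ps = ps' @ [(l, a)]" by (metis rev_exhaust surj_pair)
  from ps(2,3) have so': "sorted_wrt (<) (map fst ps')" and lt: "\<forall>y\<in>set ps'. fst y < l"
    and aa: "a \<in> A (k + l)" and qa: "\<forall>(i, b)\<in>set ps'. b \<in> A (k + i)"
    unfolding pse by (auto simp: sorted_wrt_append)
  have "\<forall>(i, b)\<in>set ps'. i < l \<and> b \<in> A (k + i)" using lt qa by auto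
  from pref[OF so' this] have pc: "concat (map (\<lambda>(j, a). subst_c (w j) a) ps') \<in> CS s A k (ms l)" .
  have "l \<le> ms l" using strict_mono_imp_increasing[OF smono] by blast
  hence "a \<in> A (k + ms l)" using aa A_mono[of A "k + l" "k + ms l", OF mono] by auto
  from wE[OF pc this] zE pse show False by simp
qed

end
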